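(* Let $V$, $M$ and the bilinear form $b:V\times M\to\mathbb{R}$ be as described in the context, and let $B^T:M\to V'$ be defined by ${}_{V}\langle \Sigma, B^T\psi\rangle_{V'}=b(\Sigma,\psi)$ for all $\Sigma\in V$. Then $\operatorname{Ker} B^T=\{0\}$, i.e. if $\psi\in M$ satisfies $b(\Sigma,\psi)=0$ for all $\Sigma\in V$, then $\psi=0$.
   Context: Network: a stent is modelled by a finite connected graph with vertices $j=1,\dots,n_{\mathcal V}$ located at points $\mathcal V_j\in\mathbb{R}^3$ and oriented edges $i=1,\dots,n_{\mathcal E}$. $J_j^-$ is the set of edges leaving vertex $j$ and $J_j^+$ the set of edges entering vertex $j$. Edge $i$ is a curve of length $\ell^i>0$ with arc-length parametrization $\Phi^i:[0,\ell^i]\to\mathbb{R}^3$ (smooth), with $\Phi^i(0)$ the position of the vertex it leaves and $\Phi^i(\ell^i)$ the position of the vertex it enters; $t^i=(\Phi^i)'$ is the unit tangent. $Q^i:[0,\ell^i]\to\mathbb{R}^{3\times 3}$ is continuous with orthogonal values and $H^i\in\mathbb{R}^{3\times3}$ is a positive definite diagonal matrix. Loads $f^i\in L^2(0,\ell^i;\mathbb{R}^3)$. Matrices: $A^+_{I}\in\mathbb{R}^{3n_{\mathcal V}\times 3n_{\mathcal E}}$ is the block matrix whose $3\times3$ block in block row $j$, block column $i$ is $I_3$ if $i\in J_j^+$ and $0$ otherwise; $A^-_{I}$ is defined the same way with $J_j^-$. $\mathbb P^i_{\mathcal E}\in\mathbb{R}^{3\times 3n_{\mathcal E}}$ extracts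 the $i$-th block of three coordinates. Spaces: $L^2(\mathcal N;\mathbb{R}^3)=\prod_{i=1}^{n_{\mathcal E}}L^2(0,\ell^i;\mathbb{R}^3)$ and $L^2_{H^1}(\mathcal N;\mathbb{R}^3)=\prod_{i=1}^{n_{\mathcal E}}H^1(0,\ell^i;\mathbb{R}^3)$ (no continuity at vertices imposed), with norms $(\sum_i\|y^i\|^2)^{1/2}$. $\int_{\mathcal N}v:=\sum_i\int_0^{\ell^i}v^i\,ds$. $V=L^2(\mathcal N;\mathbb{R}^3)\times L^2(\mathcal N;\mathbb{R}^3)\times(\mathbb{R}^{3n_{\mathcal E}})^4\times\mathbb{R}^3\times\mathbb{R}^3$ with elements $\Sigma=(q,p,P_+,P_-,Q_+,Q_-,\alpha,\beta)$ (and $\Gamma=(\xi,\theta,\Theta_+,\Theta_-,\Xi_+,\Xi_-,\gamma,\delta)$), $M=L^2_{H^1}(\mathcal N;\mathbb{R}^3)\times L^2_{H^1}(\mathcal N;\mathbb{R}^3)\times\mathbb{R}^{3n_{\mathcal V}}\times\mathbb{R}^{3n_{\mathcal V}}$ with elements $\psi=(v,w,V,W)$; both carry the product Hilbert norms. Components of vectors in $\mathbb{R}^{3n_{\mathcal E}}$ are written $P_+=(P_+^1,\dots,P_+^{n_{\mathcal E}})$, etc. Forms: $a(\Sigma,\Gamma)=\sum_i\int_0^{\ell^i}Q^i(H^i)^{-1}(Q^i)^Tq^i\cdot\xi^i\,ds$; $b(\Sigma,\psi)=\sum_i\int_0^{\ell^i}\big(-p^i\cdot(\partial_sv^i+t^i\times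 w^i)-q^i\cdot\partial_sw^i\big)ds+\sum_i\big(P^i_+\cdot v^i(\ell^i)-P^i_-\cdot v^i(0)\big)+\sum_i\big(Q^i_+\cdot w^i(\ell^i)-Q^i_-\cdot w^i(0)\big)-(A^+_IP_+-A^-_IP_-)\cdot V-(A^+_IQ_+-A^-_IQ_-)\cdot W+\alpha\cdot\int_{\mathcal N}v+\beta\cdot\int_{\mathcal N}w$; $f(\psi)=-\sum_i\int_0^{\ell^i}f^i\cdot v^i\,ds$. *)

theory Defs
  imports "HOL-Analysis.Analysis"
begin

(* Edges are indexed by i < nE, vertices by j < nV.  src i = vertex edge i leaves,
   tgt i = vertex edge i enters.  Vectors of R^{3 nE} / R^{3 nV} are block-indexed
   functions nat => real^3 (only indices < nE / < nV matter). *)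

definition L2 :: "real \<Rightarrow> (real \<Rightarrow> real^3) \<Rightarrow> bool" where
  "L2 l f \<longleftrightarrow> f measurable_on {0..l} \<and> (\<lambda>s. (norm (f s))\<^sup>2) integrable_on {0..l}"

(* v in H^1(0,l;R^3) (continuous representative) with weak derivative dv in L^2 *)
definition H1_with_deriv :: "real \<Rightarrow> (real \<Rightarrow> real^3) \<Rightarrow> (real \<Rightarrow> real^3) \<Rightarrow> bool" where
  "H1_with_deriv l v dv \<longleftrightarrow> L2 l v \<and> L2 l dv \<and>
     (\<forall>x\<in>{0..l}. v x = v 0 + integral {0..x} dv)"

definition graph_adj :: "nat \<Rightarrow> (nat \<Rightarrow> nat) \<Rightarrow> (nat \<Rightarrow> nat) \<Rightarrow> nat \<Rightarrow> nat \<Rightarrow> bool" where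
  "graph_adj nE src tgt a c \<longleftrightarrow> (\<exists>i<nE. (src i = a \<and> tgt i = c) \<or> (src i = c \<and> tgt i = a))"

definition connected_graph :: "nat \<Rightarrow> nat \<Rightarrow> (nat \<Rightarrow> nat) \<Rightarrow> (nat \<Rightarrow> nat) \<Rightarrow> bool" where
  "connected_graph nV nE src tgt \<longleftrightarrow> (\<forall>i<nE. src i < nV \<and> tgt i < nV) \<and>
     (\<forall>j<nV. \<forall>k<nV. (graph_adj nE src tgt)\<^sup>*\<^sup>* j k)"

definition Aplus :: "nat \<Rightarrow> (nat \<Rightarrow> nat) \<Rightarrow> (nat \<Rightarrow> real^3) \<Rightarrow> nat \<Rightarrow> real^3" where
  "Aplus nE tgt P j = (\<Sum>i\<in>{i. i < nE \<and> tgt i = j}. P i)"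

definition Aminus :: "nat \<Rightarrow> (nat \<Rightarrow> nat) \<Rightarrow> (nat \<Rightarrow> real^3) \<Rightarrow> nat \<Rightarrow> real^3" where
  "Aminus nE src P j = (\<Sum>i\<in>{i. i < nE \<and> src i = j}. P i)"

definition dotV :: "nat \<Rightarrow> (nat \<Rightarrow> real^3) \<Rightarrow> (nat \<Rightarrow> real^3) \<Rightarrow> real" where
  "dotV nV X Y = (\<Sum>j<nV. X j \<bullet> Y j)"

definition int_net :: "nat \<Rightarrow> (nat \<Rightarrow> real) \<Rightarrow> (nat \<Rightarrow> real \<Rightarrow> real^3) \<Rightarrow> real^3" where
  "int_net nE len v = (\<Sum>i<nE. integral {0..len i} (v i))"

(* the bilinear form b(Sigma, psi); Sigma = (q,p,Pp,Pm,Qp,Qm,alpha,beta),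
   psi = (v,w,V,W) with weak derivatives dv, dw of v, w *)
definition bform ::
  "nat \<Rightarrow> nat \<Rightarrow> (nat \<Rightarrow> nat) \<Rightarrow> (nat \<Rightarrow> nat) \<Rightarrow> (nat \<Rightarrow> real) \<Rightarrow> (nat \<Rightarrow> real \<Rightarrow> real^3) \<Rightarrow>
   (nat \<Rightarrow> real \<Rightarrow> real^3) \<Rightarrow> (nat \<Rightarrow> real \<Rightarrow> real^3) \<Rightarrow>
   (nat \<Rightarrow> real^3) \<Rightarrow> (nat \<Rightarrow> real^3) \<Rightarrow> (nat \<Rightarrow> real^3) \<Rightarrow> (nat \<Rightarrow> real^3) \<Rightarrow> real^3 \<Rightarrow> real^3 \<Rightarrow>
   (nat \<Rightarrow> real \<Rightarrow> real^3) \<Rightarrow> (nat \<Rightarrow> real \<Rightarrow> real^3) \<Rightarrow> (nat \<Rightarrow> real \<Rightarrow> real^3) \<Rightarrow> (nat \<Rightarrow> real \<Rightarrow> real^3) \<Rightarrow>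
   (nat \<Rightarrow> real^3) \<Rightarrow> (nat \<Rightarrow> real^3) \<Rightarrow> real" where
  "bform nV nE src tgt len t q p Pp Pm Qp Qm \<alpha> \<beta> v dv w dw V W =
     (\<Sum>i<nE. integral {0..len i}
        (\<lambda>s. - (p i s \<bullet> (dv i s + cross3 (t i s) (w i s))) - q i s \<bullet> dw i s))
   + (\<Sum>i<nE. Pp i \<bullet> v i (len i) - Pm i \<bullet> v i 0)
   + (\<Sum>i<nE. Qp i \<bullet> w i (len i) - Qm i \<bullet> w i 0)
   - dotV nV (\<lambda>j. Aplus nE tgt Pp j - Aminus nE src Pm j) V
   - dotV nV (\<lambda>j. Aplus nE tgt Qp j - Aminus nE src Qm j) W
   + \<alpha> \<bullet> int_net nE len v + \<beta> \<bullet> int_net nE len w"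

end

theory Submission
  imports Defs
begin

lemma L2_integrable:
  assumes "L2 l f" shows "f integrable_on {0..l}"
proof (rule measurable_bounded_by_integrable_imp_integrable)
  show "f \<in> borel_measurable (lebesgue_on {0..l})"
    using assms unfolding L2_def by (intro measurable_on_imp_borel_measurable_lebesgue) simp_all
  show "(\<lambda>s. 1 + (norm (f s))\<^sup>2) integrable_on {0..l}"
    using assms unfolding L2_def by (intro integrable_add) (simp_all add: integrable_const_ivl)
  show "norm (f x) \<le> 1 + (norm (f x))\<^sup>2" for x
  proof -
    have "norm (f x) \<le> 1 + (norm (f x))\<^sup>2" 
    proof -
      have "0 \<le> (norm (f x) - 1) * (norm (f x) - 1)" by simp
      then have "2 * norm (f x) \<le> 1 + norm (f x) * norm (f x)" by (simp add: algebra_simps)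
      then show ?thesis using norm_ge_zero[of "f x"] unfolding power2_eq_square by linarith
    qed
    then show ?thesis .
  qed
qed simp

lemma L2_step: "L2 l (\<lambda>s. if s \<in> {0..x} then (e::real^3) else 0)"
  unfolding L2_def
proof
  show "(\<lambda>s. if s \<in> {0..x} then e else 0) measurable_on {0..l}"
  proof -
    have "(\<lambda>s. if s \<in> {0..x} then e else 0) integrable_on {0..l}"
      unfolding integrable_restrict_Int by (simp add: Int_atLeastAtMost integrable_const_ivl)
    then have "(\<lambda>s. if s \<in> {0..x} then e else 0) \<in> borel_measurable (lebesgue_on {0..l})"
      by (rule integrable_imp_measurable)
    moreover have "{0..l} \<in> sets lebesgue" by simp
    ultimately show ?thesis using measurable_on_iff_borel_measurable by blast
  qed
  have eq: "(\<lambda>s. (norm (if s \<in> {0..x} then e else 0))\<^sup>2) = (\<lambda>s. if s \<in> {0..x} then (norm e)\<^sup>2 else 0)"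
    by (rule ext) simp
  have "(\<lambda>s. if s \<in> {0..x} then (norm e)\<^sup>2 else 0) integrable_on {0..l}"
    unfolding integrable_restrict_Int by (simp add: Int_atLeastAtMost integrable_const_ivl)
  then show "(\<lambda>s. (norm (if s \<in> {0..x} then e else 0))\<^sup>2) integrable_on {0..l}" unfolding eq .
qed

lemma L2_zero: "L2 l (\<lambda>s. 0)"
  unfolding L2_def by auto

lemma step_integral:
  assumes "L2 l g" "0 \<le> x" "x \<le> l"
  shows "integral {0..l} (\<lambda>s. (if s \<in> {0..x} then e else 0) \<bullet> g s) = e \<bullet> integral {0..x} g"
proof -
  have gi: "g integrable_on {0..x}"
    by (rule integrable_on_subinterval[OF L2_integrable[OF assms(1)]]) (use assms(3) in simp)
  have "integral {0..l} (\<lambda>s. (if s \<in> {0..x} then e else 0) \<bullet> g s)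
      = integral {0..l} (\<lambda>s. if s \<in> {0..x} then e \<bullet> g s else 0)"
    by (rule integral_cong) simp
  also have "\<dots> = integral ({0..x} \<inter> {0..l}) (\<lambda>s. e \<bullet> g s)"
    by (rule integral_restrict_Int)
  also have "{0..x} \<inter> {0..l} = {0..x}" using assms by auto
  also have "integral {0..x} (\<lambda>s. e \<bullet> g s) = e \<bullet> integral {0..x} g"
    using integral_linear[OF gi bounded_linear_inner_right[of e]] by (simp add: o_def)
  finally show ?thesis .
qed

lemma single_sum:
  assumes "i < n" "\<And>k. k < n \<Longrightarrow> k \<noteq> i \<Longrightarrow> F k = 0"
  shows "(\<Sum>k<(n::nat). F k) = (F i :: 'a::comm_monoid_add)"
proof -
  have "(\<Sum>k<n. F k) = F i + (\<Sum>k\<in>{..<n} - {i}. F k)"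
    using assms(1) by (intro sum.remove) auto
  also have "(\<Sum>k\<in>{..<n} - {i}. F k) = 0" using assms(2) by (intro sum.neutral) auto
  finally show ?thesis by simp
qed


lemma const_from_deriv:
  assumes "H1_with_deriv l f df" "\<forall>x\<in>{0..l}. \<forall>e. e \<bullet> integral {0..x} df = 0"
  shows "\<forall>x\<in>{0..l}. f x = f 0"
proof
  fix x assume x: "x \<in> {0..l}"
  have "integral {0..x} df \<bullet> integral {0..x} df = 0" using assms(2) x by blast
  then have "integral {0..x} df = 0" by simp
  moreover have "f x = f 0 + integral {0..x} df" using assms(1) x unfolding H1_with_deriv_def by blast
  ultimately show "f x = f 0" by simp
qed

lemma Aplus_single:
  assumes "i < nE"
  shows "Aplus nE tgt (\<lambda>k. if k = i then e else 0) j = (if tgt i = j then e else 0)"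
  unfolding Aplus_def using assms by (subst sum.delta) auto

lemma Aminus_single:
  assumes "i < nE"
  shows "Aminus nE src (\<lambda>k. if k = i then e else 0) j = (if src i = j then e else 0)"
  unfolding Aminus_def using assms by (subst sum.delta) auto

lemma Aplus_zero: "Aplus nE tgt (\<lambda>k. 0) j = 0"
  unfolding Aplus_def by simp

lemma Aminus_zero: "Aminus nE src (\<lambda>k. 0) j = 0"
  unfolding Aminus_def by simp

lemma dotV_single:
  assumes "j0 < nV"
  shows "dotV nV (\<lambda>j. if j0 = j then e else 0) W = e \<bullet> W j0"
proof -
  have "dotV nV (\<lambda>j. if j0 = j then e else 0) W = (\<Sum>j<nV. if j = j0 then e \<bullet> W j else 0)"
    unfolding dotV_def by (intro sum.cong) auto
  also have "\<dots> = e \<bullet> W j0" using assms by (subst sum.delta) auto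
  finally show ?thesis .
qed

lemma dotV_neg_single:
  assumes "j0 < nV"
  shows "dotV nV (\<lambda>j. - (if j0 = j then e else 0)) W = - (e \<bullet> W j0)"
proof -
  have "dotV nV (\<lambda>j. - (if j0 = j then e else 0)) W = (\<Sum>j<nV. if j = j0 then - (e \<bullet> W j) else 0)"
    unfolding dotV_def by (intro sum.cong) auto
  also have "\<dots> = - (e \<bullet> W j0)" using assms by (subst sum.delta) auto
  finally show ?thesis .
qed

lemma const_net:
  fixes f :: "nat \<Rightarrow> real \<Rightarrow> real^3" and F :: "nat \<Rightarrow> real^3"
  assumes conn: "connected_graph nV nE src tgt"
    and nE_pos: "nE \<ge> 1"
    and len_pos: "\<forall>i<nE. len i > 0"
    and hc: "\<forall>i<nE. \<forall>s\<in>{0..len i}. f i s = f i 0"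
    and h0: "\<forall>i<nE. f i 0 = F (src i)"
    and h1: "\<forall>i<nE. f i (len i) = F (tgt i)"
    and hint: "int_net nE len f = 0"
  shows "(\<forall>i<nE. \<forall>s\<in>{0..len i}. f i s = 0) \<and> (\<forall>j<nV. F j = 0)"
proof -
  have adj: "F a = F c" if adj0: "graph_adj nE src tgt a c" for a c
  proof -
    obtain i where i: "i < nE" "(src i = a \<and> tgt i = c) \<or> (src i = c \<and> tgt i = a)"
      using adj0 unfolding graph_adj_def by blast
    have "len i \<in> {0..len i}" using len_pos i(1) by auto
    then have "F (src i) = F (tgt i)" using hc h0 h1 i(1) by metis
    then show ?thesis using i(2) by auto
  qed
  have path: "F j = F k" if "(graph_adj nE src tgt)\<^sup>*\<^sup>* j k" for j k
    using that by (induct rule: rtranclp_induct) (auto dest: adj)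
  define c where "c = F (src 0)"
  have src0: "src 0 < nV" using conn nE_pos unfolding connected_graph_def by auto
  have Fc: "F j = c" if "j < nV" for j
    using path[of j "src 0"] conn that src0 unfolding connected_graph_def c_def by blast
  have fc: "f i s = c" if "i < nE" "s \<in> {0..len i}" for i s
  proof -
    have "src i < nV" using conn that(1) unfolding connected_graph_def by auto
    then show ?thesis using hc h0 Fc that by metis
  qed
  have "int_net nE len f = (\<Sum>i<nE. integral {0..len i} (\<lambda>s. c))"
    unfolding int_net_def by (intro sum.cong refl integral_cong) (use fc in auto)
  also have "\<dots> = (\<Sum>i<nE. len i) *\<^sub>R c"
    using len_pos by (simp add: scaleR_sum_left less_imp_le)
  finally have "(\<Sum>i<nE. len i) *\<^sub>R c = 0" using hint by simp
  moreover have "(\<Sum>i<nE. len i) > 0"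
    using len_pos nE_pos by (intro sum_pos) (auto simp: lessThan_empty_iff)
  ultimately have "c = 0" by simp
  then show ?thesis using fc Fc by auto
qed

lemma dotV_zero: "dotV nV (\<lambda>j. 0) W = 0"
  unfolding dotV_def by simp

lemma sum_single_inner:
  assumes "i < (n::nat)"
  shows "(\<Sum>k<n. (if k = i then e else 0) \<bullet> f k) = e \<bullet> (f i :: 'a::real_inner)"
proof -
  have "(\<Sum>k<n. (if k = i then e else 0) \<bullet> f k) = (\<Sum>k<n. if k = i then e \<bullet> f k else 0)"
    by (rule sum.cong) auto
  also have "\<dots> = e \<bullet> f i" using assms by (subst sum.delta) auto
  finally show ?thesis .
qed

lemma inner_all_eq:
  assumes "\<And>e. e \<bullet> a = e \<bullet> (b::'a::real_inner)" shows "a = b"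
proof -
  have "(a - b) \<bullet> (a - b) = 0" using assms[of "a - b"] by (simp add: inner_diff_right)
  then show ?thesis by simp
qed

theorem lemma3p1:
  fixes nV nE :: nat
    and src tgt :: "nat \<Rightarrow> nat"
    and pos :: "nat \<Rightarrow> real^3"
    and len :: "nat \<Rightarrow> real"
    and \<Phi> t :: "nat \<Rightarrow> real \<Rightarrow> real^3"
    and v dv w dw :: "nat \<Rightarrow> real \<Rightarrow> real^3"
    and V W :: "nat \<Rightarrow> real^3"
  assumes conn: "connected_graph nV nE src tgt"
    and nE_pos: "nE \<ge> 1"
    and len_pos: "\<forall>i<nE. len i > 0"
    and tangent: "\<forall>i<nE. \<forall>s\<in>{0..len i}. (\<Phi> i has_vector_derivative t i s) (at s within {0..len i})"
    and t_cont: "\<forall>i<nE. continuous_on {0..len i} (t i)"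
    and t_unit: "\<forall>i<nE. \<forall>s\<in>{0..len i}. norm (t i s) = 1"
    and Phi_ends: "\<forall>i<nE. \<Phi> i 0 = pos (src i) \<and> \<Phi> i (len i) = pos (tgt i)"
    and v_H1: "\<forall>i<nE. H1_with_deriv (len i) (v i) (dv i)"
    and w_H1: "\<forall>i<nE. H1_with_deriv (len i) (w i) (dw i)"
    and ker: "\<forall>q p Pp Pm Qp Qm \<alpha> \<beta>. (\<forall>i<nE. L2 (len i) (q i) \<and> L2 (len i) (p i)) \<longrightarrow>
               bform nV nE src tgt len t q p Pp Pm Qp Qm \<alpha> \<beta> v dv w dw V W = 0"
  shows "(\<forall>i<nE. \<forall>s\<in>{0..len i}. v i s = 0 \<and> w i s = 0) \<and> (\<forall>j<nV. V j = 0 \<and> W j = 0)"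
proof -
  have ends: "src i < nV \<and> tgt i < nV" if "i < nE" for i
    using conn that unfolding connected_graph_def by blast
  have dwL: "L2 (len i) (dw i)" if "i < nE" for i
    using w_H1 that unfolding H1_with_deriv_def by blast
  have dvL: "L2 (len i) (dv i)" if "i < nE" for i
    using v_H1 that unfolding H1_with_deriv_def by blast
  have ker': "bform nV nE src tgt len t q p Pp Pm Qp Qm \<alpha> \<beta> v dv w dw V W = 0"
    if "\<And>i. i < nE \<Longrightarrow> L2 (len i) (q i)" "\<And>i. i < nE \<Longrightarrow> L2 (len i) (p i)"
    for q p Pp Pm Qp Qm \<alpha> \<beta>
    using ker that by blast
  have ker0: "bform nV nE src tgt len t (\<lambda>k s. 0) (\<lambda>k s. 0) Pp Pm Qp Qm \<alpha> \<beta> v dv w dw V W = 0"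
    for Pp Pm Qp Qm \<alpha> \<beta>
    by (rule ker') (simp_all add: L2_zero)
  have bd: "w i (len i) = W (tgt i) \<and> w i 0 = W (src i) \<and> v i (len i) = V (tgt i) \<and> v i 0 = V (src i)"
    if i: "i < nE" for i
  proof -
    have e1: "tgt i < nV" "src i < nV" using ends[OF i] by auto
    have "e \<bullet> w i (len i) = e \<bullet> W (tgt i)" for e
    proof -
      have "bform nV nE src tgt len t (\<lambda>k s. 0) (\<lambda>k s. 0) (\<lambda>k. 0) (\<lambda>k. 0) (\<lambda>k. if k = i then e else 0) (\<lambda>k. 0) 0 0 v dv w dw V W
          = e \<bullet> w i (len i) - e \<bullet> W (tgt i)"
        unfolding bform_def using i e1 by (simp add: Aplus_single Aminus_single Aplus_zero Aminus_zero dotV_single sum_single_inner dotV_zero)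
      then show ?thesis using ker0 by simp
    qed
    moreover have "e \<bullet> w i 0 = e \<bullet> W (src i)" for e
    proof -
      have "bform nV nE src tgt len t (\<lambda>k s. 0) (\<lambda>k s. 0) (\<lambda>k. 0) (\<lambda>k. 0) (\<lambda>k. 0) (\<lambda>k. if k = i then e else 0) 0 0 v dv w dw V W
          = - (e \<bullet> w i 0) + e \<bullet> W (src i)"
        unfolding bform_def using i e1 by (simp add: Aplus_single Aminus_single Aplus_zero Aminus_zero dotV_neg_single sum_single_inner dotV_zero sum_negf)
      then show ?thesis using ker0 by simp
    qed
    moreover have "e \<bullet> v i (len i) = e \<bullet> V (tgt i)" for e
    proof -
      have "bform nV nE src tgt len t (\<lambda>k s. 0) (\<lambda>k s. 0) (\<lambda>k. if k = i then e else 0) (\<lambda>k. 0) (\<lambda>k. 0) (\<lambda>k. 0) 0 0 v dv w dw V W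
          = e \<bullet> v i (len i) - e \<bullet> V (tgt i)"
        unfolding bform_def using i e1 by (simp add: Aplus_single Aminus_single Aplus_zero Aminus_zero dotV_single sum_single_inner dotV_zero)
      then show ?thesis using ker0 by simp
    qed
    moreover have "e \<bullet> v i 0 = e \<bullet> V (src i)" for e
    proof -
      have "bform nV nE src tgt len t (\<lambda>k s. 0) (\<lambda>k s. 0) (\<lambda>k. 0) (\<lambda>k. if k = i then e else 0) (\<lambda>k. 0) (\<lambda>k. 0) 0 0 v dv w dw V W
          = - (e \<bullet> v i 0) + e \<bullet> V (src i)"
        unfolding bform_def using i e1 by (simp add: Aplus_single Aminus_single Aplus_zero Aminus_zero dotV_neg_single sum_single_inner dotV_zero sum_negf)
      then show ?thesis using ker0 by simp
    qed
    ultimately show ?thesis by (blast intro: inner_all_eq)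
  qed
  have intw: "int_net nE len w = 0"
  proof (rule inner_all_eq)
    fix e
    have "bform nV nE src tgt len t (\<lambda>k s. 0) (\<lambda>k s. 0) (\<lambda>k. 0) (\<lambda>k. 0) (\<lambda>k. 0) (\<lambda>k. 0) 0 e v dv w dw V W
        = e \<bullet> int_net nE len w"
      unfolding bform_def by (simp add: Aplus_zero Aminus_zero dotV_def)
    then show "e \<bullet> int_net nE len w = e \<bullet> 0" using ker0 by simp
  qed
  have intv: "int_net nE len v = 0"
  proof (rule inner_all_eq)
    fix e
    have "bform nV nE src tgt len t (\<lambda>k s. 0) (\<lambda>k s. 0) (\<lambda>k. 0) (\<lambda>k. 0) (\<lambda>k. 0) (\<lambda>k. 0) e 0 v dv w dw V W
        = e \<bullet> int_net nE len v"
      unfolding bform_def by (simp add: Aplus_zero Aminus_zero dotV_def)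
    then show "e \<bullet> int_net nE len v = e \<bullet> 0" using ker0 by simp
  qed
  have wconst: "\<forall>i<nE. \<forall>s\<in>{0..len i}. w i s = w i 0"
  proof (intro allI impI)
    fix i assume i: "i < nE"
    have "\<forall>x\<in>{0..len i}. \<forall>e. e \<bullet> integral {0..x} (dw i) = 0"
    proof (intro ballI allI)
      fix x e assume x: "x \<in> {0..len i}"
      define q where "q = (\<lambda>k s. if k = i then (if s \<in> {0..x} then e else 0) else (0::real^3))"
      have Lq: "L2 (len k) (q k)" for k
        using L2_step[of "len i" x e] L2_zero[of "len k"] by (cases "k = i") (simp_all add: q_def)
      have "bform nV nE src tgt len t q (\<lambda>k s. 0) (\<lambda>k. 0) (\<lambda>k. 0) (\<lambda>k. 0) (\<lambda>k. 0) 0 0 v dv w dw V W = 0"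
        by (rule ker') (simp_all add: Lq L2_zero)
      moreover have "bform nV nE src tgt len t q (\<lambda>k s. 0) (\<lambda>k. 0) (\<lambda>k. 0) (\<lambda>k. 0) (\<lambda>k. 0) 0 0 v dv w dw V W
          = (\<Sum>k<nE. integral {0..len k} (\<lambda>s. - (q k s \<bullet> dw k s)))"
        unfolding bform_def by (simp add: Aplus_zero Aminus_zero dotV_def)
      moreover have "(\<Sum>k<nE. integral {0..len k} (\<lambda>s. - (q k s \<bullet> dw k s)))
          = integral {0..len i} (\<lambda>s. - (q i s \<bullet> dw i s))"
        by (rule single_sum[OF i]) (simp add: q_def)
      moreover have "integral {0..len i} (\<lambda>s. - (q i s \<bullet> dw i s)) = - (e \<bullet> integral {0..x} (dw i))"
        using step_integral[OF dwL[OF i], of x e] x by (simp add: q_def)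
      ultimately show "e \<bullet> integral {0..x} (dw i) = 0" by simp
    qed
    then show "\<forall>s\<in>{0..len i}. w i s = w i 0" using const_from_deriv w_H1 i by blast
  qed
  have wres: "(\<forall>i<nE. \<forall>s\<in>{0..len i}. w i s = 0) \<and> (\<forall>j<nV. W j = 0)"
    by (rule const_net[OF conn nE_pos len_pos wconst _ _ intw]) (use bd in auto)
  have vconst: "\<forall>i<nE. \<forall>s\<in>{0..len i}. v i s = v i 0"
  proof (intro allI impI)
    fix i assume i: "i < nE"
    have "\<forall>x\<in>{0..len i}. \<forall>e. e \<bullet> integral {0..x} (dv i) = 0"
    proof (intro ballI allI)
      fix x e assume x: "x \<in> {0..len i}"
      define p where "p = (\<lambda>k s. if k = i then (if s \<in> {0..x} then e else 0) else (0::real^3))"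
      have Lp: "L2 (len k) (p k)" for k
        using L2_step[of "len i" x e] L2_zero[of "len k"] by (cases "k = i") (simp_all add: p_def)
      have "bform nV nE src tgt len t (\<lambda>k s. 0) p (\<lambda>k. 0) (\<lambda>k. 0) (\<lambda>k. 0) (\<lambda>k. 0) 0 0 v dv w dw V W = 0"
        by (rule ker') (simp_all add: Lp L2_zero)
      moreover have "bform nV nE src tgt len t (\<lambda>k s. 0) p (\<lambda>k. 0) (\<lambda>k. 0) (\<lambda>k. 0) (\<lambda>k. 0) 0 0 v dv w dw V W
          = (\<Sum>k<nE. integral {0..len k} (\<lambda>s. - (p k s \<bullet> (dv k s + cross3 (t k s) (w k s)))))"
        unfolding bform_def by (simp add: Aplus_zero Aminus_zero dotV_def)
      moreover have "(\<Sum>k<nE. integral {0..len k} (\<lambda>s. - (p k s \<bullet> (dv k s + cross3 (t k s) (w k s)))))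
          = integral {0..len i} (\<lambda>s. - (p i s \<bullet> (dv i s + cross3 (t i s) (w i s))))"
        by (rule single_sum[OF i]) (simp add: p_def)
      moreover have "integral {0..len i} (\<lambda>s. - (p i s \<bullet> (dv i s + cross3 (t i s) (w i s))))
          = integral {0..len i} (\<lambda>s. - (p i s \<bullet> dv i s))"
        by (rule integral_cong) (use wres i in simp)
      moreover have "integral {0..len i} (\<lambda>s. - (p i s \<bullet> dv i s)) = - (e \<bullet> integral {0..x} (dv i))"
        using step_integral[OF dvL[OF i], of x e] x by (simp add: p_def)
      ultimately show "e \<bullet> integral {0..x} (dv i) = 0" by simp
    qed
    then show "\<forall>s\<in>{0..len i}. v i s = v i 0" using const_from_deriv v_H1 i by blast
  qed
  have vres: "(\<forall>i<nE. \<forall>s\<in>{0..len i}. v i s = 0) \<and> (\<forall>j<nV. V j = 0)"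
    by (rule const_net[OF conn nE_pos len_pos vconst _ _ intv]) (use bd in auto)
  show ?thesis using wres vres by blast
qed

end
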